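(* For every Markov chain with positive equilibrium $P^*$ and every probability distribution $P^0$, the velocity vector $\frac{dP}{dt}\big|_{P=P^0}$ given by its Kolmogorov equation is a linear combination with non-negative coefficients of the vectors $\frac{dP}{dt}\big|_{P=P^0}$ of the two-state reversible chains $A_i\rightleftharpoons A_j$ ($i\ne j$) with equilibrium $P^*$, i.e. of the vectors $\bigl(\frac{p^0_j}{p^*_j}-\frac{p^0_i}{p^*_i}\bigr)\gamma^{ji}$, $1\le j<i\le n$. (The coefficients may depend on $P^0$.) Consequently, for every $P^0$ the set of all vectors $\frac{dP}{dt}\big|_{P=P^0}$ over all Markov chains with equilibrium $P^*$ equals the set of such vectors over all chains with detailed balance and equilibrium $P^*$, namely the cone $\mathbf{Q}(P^0,P^* )$.
   Context: Fix $n\ge 2$ and $P^*=(p^*_i)$ with $p^*_i>0$, $\sum_i p^*_i=1$. A Markov chain is given by rate constants $q_{ij}\ge 0$ ($i\ne j$) with Kolmogorov equation $\frac{dp_i}{dt}=\sum_{j\ne i}(q_{ij}p_j-q_{ji}p_i)$; it has equilibrium $P^*$ if $\sum_{j\ne i}q_{ij}p^*_j=\bigl(\sum_{j\ne i}q_{ji}\bigr)p^*_i$ for all $i$. The two-state chain $A_i\rightleftharpoons A_j$ with equilibrium $P^*$ has only nonzero rates $q_{ji}=1/p^*_i$, $q_{ij}=1/p^*_j$. It has detailed balance if $q_{ij}p^*_j=q_{ji}p^*_i$ for all $i\ne j$. For $i\neq j$, $\gamma^{ji}$ is the vector with $\gamma^{ji}_j=-1$, $\gamma^{ji}_i=1$,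 other coordinates $0$; ${\rm cone}$ denotes non-negative linear combinations; ${\rm sign}$ is the three-valued sign function; $\mathbf{Q}(P,P^* )={\rm cone}\{\gamma^{ji}\,{\rm sign}(\tfrac{p_j}{p^*_j}-\tfrac{p_i}{p^*_i}) : 1\le j<i\le n\}$. *)

theory Defs
  imports Main "HOL.Real"
begin

text \<open>States are indexed by 0,...,n-1 (the paper's A_1,...,A_n). Vectors are
  functions nat => real; only the coordinates k < n are meaningful, and all
  vectors produced below are 0 outside {..<n}.\<close>

definition markov_rates :: "nat \<Rightarrow> (nat \<Rightarrow> nat \<Rightarrow> real) \<Rightarrow> bool" where
  "markov_rates n q \<longleftrightarrow> (\<forall>i<n. \<forall>j<n. i \<noteq> j \<longrightarrow> q i j \<ge> 0)"

definition kolm_rhs :: "nat \<Rightarrow> (nat \<Rightarrow> nat \<Rightarrow> real) \<Rightarrow> (nat \<Rightarrow> real) \<Rightarrow> (nat \<Rightarrow> real)" where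
  "kolm_rhs n q p = (\<lambda>i. if i < n then (\<Sum>j\<in>{..<n} - {i}. q i j * p j - q j i * p i) else 0)"

definition has_equilibrium :: "nat \<Rightarrow> (nat \<Rightarrow> nat \<Rightarrow> real) \<Rightarrow> (nat \<Rightarrow> real) \<Rightarrow> bool" where
  "has_equilibrium n q ps \<longleftrightarrow>
     (\<forall>i<n. (\<Sum>j\<in>{..<n} - {i}. q i j * ps j) = (\<Sum>j\<in>{..<n} - {i}. q j i) * ps i)"

definition detailed_balance :: "nat \<Rightarrow> (nat \<Rightarrow> nat \<Rightarrow> real) \<Rightarrow> (nat \<Rightarrow> real) \<Rightarrow> bool" where
  "detailed_balance n q ps \<longleftrightarrow> (\<forall>i<n. \<forall>j<n. i \<noteq> j \<longrightarrow> q i j * ps j = q j i * ps i)"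

definition two_state :: "(nat \<Rightarrow> real) \<Rightarrow> nat \<Rightarrow> nat \<Rightarrow> (nat \<Rightarrow> nat \<Rightarrow> real)" where
  "two_state ps i j = (\<lambda>a b. if a = j \<and> b = i then 1 / ps i
                              else if a = i \<and> b = j then 1 / ps j else 0)"

definition gamma :: "nat \<Rightarrow> nat \<Rightarrow> (nat \<Rightarrow> real)" where
  "gamma j i = (\<lambda>k. if k = i then 1 else if k = j then -1 else 0)"

definition pairs :: "nat \<Rightarrow> (nat \<times> nat) set" where
  "pairs n = {(j, i). j < i \<and> i < n}"

definition cone_of :: "'a set \<Rightarrow> ('a \<Rightarrow> nat \<Rightarrow> real) \<Rightarrow> (nat \<Rightarrow> real) set" where
  "cone_of I v = {x. \<exists>c. (\<forall>k\<in>I. c k \<ge> 0) \<and> x = (\<lambda>m. \<Sum>k\<in>I. c k * v k m)}"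

definition Qcone :: "nat \<Rightarrow> (nat \<Rightarrow> real) \<Rightarrow> (nat \<Rightarrow> real) \<Rightarrow> (nat \<Rightarrow> real) set" where
  "Qcone n p ps = cone_of (pairs n)
      (\<lambda>(j, i) m. sgn (p j / ps j - p i / ps i) * gamma j i m)"

end

theory Submission imports Defs begin

lemma finite_pairs: "finite (pairs n)"
  by (rule finite_subset[of _ "{..<n} \<times> {..<n}"]) (auto simp: pairs_def)

lemma cone_zero: "(\<lambda>m. 0) \<in> cone_of I v"
  unfolding cone_of_def by (rule CollectI, rule exI[of _ "\<lambda>_. 0"]) auto

lemma cone_add_gen:
  assumes "y \<in> cone_of I v" "finite I" "k \<in> I" "t \<ge> 0"
  shows "(\<lambda>m. y m + t * v k m) \<in> cone_of I v"
proof -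
  obtain c where c: "\<forall>k\<in>I. c k \<ge> 0" "y = (\<lambda>m. \<Sum>k\<in>I. c k * v k m)"
    using assms(1) unfolding cone_of_def by blast
  define d where "d = (\<lambda>k'. c k' + (if k' = k then t else 0))"
  have "(\<lambda>m. y m + t * v k m) = (\<lambda>m. \<Sum>k'\<in>I. d k' * v k' m)"
  proof
    fix m
    have "(\<Sum>k'\<in>I. d k' * v k' m) = (\<Sum>k'\<in>I. c k' * v k' m + (if k' = k then t * v k' m else 0))"
      by (rule sum.cong) (auto simp: d_def algebra_simps)
    also have "\<dots> = y m + t * v k m"
      using assms(2,3) by (simp add: sum.distrib c(2))
    finally show "y m + t * v k m = (\<Sum>k'\<in>I. d k' * v k' m)" by simp
  qed
  moreover have "\<forall>k'\<in>I. d k' \<ge> 0" using c(1) assms(4) by (auto simp: d_def)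
  ultimately show ?thesis unfolding cone_of_def by blast
qed

lemma cone_cong: "(\<And>k. k \<in> I \<Longrightarrow> v k = w k) \<Longrightarrow> cone_of I v = cone_of I w"
proof -
  assume h: "\<And>k. k \<in> I \<Longrightarrow> v k = w k"
  have "\<And>c m. (\<Sum>k\<in>I. c k * v k m) = (\<Sum>k\<in>I. c k * w k m)"
    by (rule sum.cong) (auto simp: h)
  then show ?thesis unfolding cone_of_def by simp
qed

lemma pairs_gamma:
  assumes "m < n"
  shows "(\<Sum>(j,i)\<in>pairs n. F j i * gamma j i m) = (\<Sum>j<m. F j m) - (\<Sum>i\<in>{m<..<n}. F m i)"
proof -
  have "(\<Sum>(j,i)\<in>pairs n. F j i * gamma j i m)
      = (\<Sum>(j,i)\<in>pairs n. (if i = m then F j i else 0)) - (\<Sum>(j,i)\<in>pairs n. (if j = m then F j i else 0))"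
    by (subst sum_subtractf[symmetric]) (rule sum.cong, auto simp: pairs_def gamma_def split: prod.splits)
  also have "(\<Sum>(j,i)\<in>pairs n. (if i = m then F j i else 0)) = (\<Sum>j<m. F j m)"
  proof -
    have "(\<Sum>(j,i)\<in>pairs n. (if i = m then F j i else 0))
        = (\<Sum>(j,i)\<in>(\<lambda>j. (j,m)) ` {..<m}. (if i = m then F j i else 0))"
      by (rule sum.mono_neutral_right[OF finite_pairs]) (auto simp: pairs_def assms)
    also have "\<dots> = (\<Sum>j<m. F j m)"
      by (subst sum.reindex) (auto simp: inj_on_def)
    finally show ?thesis .
  qed
  also have "(\<Sum>(j,i)\<in>pairs n. (if j = m then F j i else 0)) = (\<Sum>i\<in>{m<..<n}. F m i)"
  proof -
    have "(\<Sum>(j,i)\<in>pairs n. (if j = m then F j i else 0))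
        = (\<Sum>(j,i)\<in>(\<lambda>i. (m,i)) ` {m<..<n}. (if j = m then F j i else 0))"
      by (rule sum.mono_neutral_right[OF finite_pairs]) (auto simp: pairs_def assms)
    also have "\<dots> = (\<Sum>i\<in>{m<..<n}. F m i)"
      by (subst sum.reindex) (auto simp: inj_on_def)
    finally show ?thesis .
  qed
  finally show ?thesis .
qed

lemma kolm_db:
  assumes ps: "\<forall>i<n. ps i > 0" and db: "detailed_balance n q ps"
  shows "kolm_rhs n q p = (\<lambda>m. \<Sum>(j,i)\<in>pairs n. (q i j * ps j) * ((p j / ps j - p i / ps i) * gamma j i m))"
proof
  fix m
  show "kolm_rhs n q p m = (\<Sum>(j,i)\<in>pairs n. (q i j * ps j) * ((p j / ps j - p i / ps i) * gamma j i m))"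
  proof (cases "m < n")
    case False
    then show ?thesis
      by (auto simp: kolm_rhs_def gamma_def pairs_def intro!: sum.neutral)
  next
    case True
    define x where "x = (\<lambda>k. p k / ps k)"
    define w where "w = (\<lambda>a b. q a b * ps b)"
    have px: "\<And>k. k < n \<Longrightarrow> p k = ps k * x k" using ps by (auto simp: x_def)
    have wsym: "\<And>a b. a < n \<Longrightarrow> b < n \<Longrightarrow> a \<noteq> b \<Longrightarrow> w a b = w b a"
      using db by (auto simp: w_def detailed_balance_def)
    have "(\<Sum>(j,i)\<in>pairs n. (q i j * ps j) * ((p j / ps j - p i / ps i) * gamma j i m))
        = (\<Sum>(j,i)\<in>pairs n. (w i j * (x j - x i)) * gamma j i m)"
      by (rule sum.cong) (auto simp: w_def x_def)
    also have "\<dots> = (\<Sum>j<m. w m j * (x j - x m)) - (\<Sum>i\<in>{m<..<n}. w i m * (x m - x i))"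
      by (rule pairs_gamma[OF True])
    also have "\<dots> = (\<Sum>j<m. w m j * (x j - x m)) + (\<Sum>i\<in>{m<..<n}. w m i * (x i - x m))"
    proof -
      have "(\<Sum>i\<in>{m<..<n}. w i m * (x m - x i)) = - (\<Sum>i\<in>{m<..<n}. w m i * (x i - x m))"
        by (subst sum_negf[symmetric], rule sum.cong) (auto simp: wsym[OF _ True] algebra_simps)
      then show ?thesis by simp
    qed
    also have "\<dots> = (\<Sum>k\<in>{..<m} \<union> {m<..<n}. w m k * (x k - x m))"
      by (subst sum.union_disjoint) auto
    also have "{..<m} \<union> {m<..<n} = {..<n} - {m}" using True by auto
    also have "(\<Sum>k\<in>{..<n} - {m}. w m k * (x k - x m)) = (\<Sum>k\<in>{..<n} - {m}. q m k * p k - q k m * p m)"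
    proof (rule sum.cong)
      fix k assume k: "k \<in> {..<n} - {m}"
      have "q k m * ps m = q m k * ps k" using db k True by (auto simp: detailed_balance_def)
      then show "w m k * (x k - x m) = q m k * p k - q k m * p m"
        using px[of k] px[of m] k True by (auto simp: w_def algebra_simps)
    qed simp
    finally show ?thesis using True by (simp add: kolm_rhs_def)
  qed
qed


lemma two_state_db:
  assumes ps: "\<forall>i<n. ps i > 0" and ji: "(j,i) \<in> pairs n"
  shows "detailed_balance n (two_state ps i j) ps"
proof -
  have "ps j > 0" "ps i > 0" using ps ji by (auto simp: pairs_def)
  then show ?thesis using ji by (auto simp: detailed_balance_def two_state_def pairs_def)
qed

lemma part2:
  assumes ps: "\<forall>i<n. ps i > 0" and ji: "(j,i) \<in> pairs n"
  shows "kolm_rhs n (two_state ps i j) p = (\<lambda>m. (p j / ps j - p i / ps i) * gamma j i m)"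
proof -
  have pp: "ps j > 0" "ps i > 0" using ps ji by (auto simp: pairs_def)
  have "kolm_rhs n (two_state ps i j) p = (\<lambda>m. \<Sum>(j',i')\<in>pairs n. (two_state ps i j i' j' * ps j') * ((p j' / ps j' - p i' / ps i') * gamma j' i' m))"
    by (rule kolm_db[OF ps two_state_db[OF ps ji]])
  also have "\<dots> = (\<lambda>m. \<Sum>k\<in>pairs n. if k = (j,i) then (p j / ps j - p i / ps i) * gamma j i m else 0)"
  proof (rule ext, rule sum.cong)
    fix m k assume k: "k \<in> pairs n"
    obtain j' i' where k': "k = (j',i')" by (cases k)
    show "(case k of (j', i') \<Rightarrow> two_state ps i j i' j' * ps j' * ((p j' / ps j' - p i' / ps i') * gamma j' i' m))
        = (if k = (j, i) then (p j / ps j - p i / ps i) * gamma j i m else 0)"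
      using k k' ji pp by (auto simp: two_state_def pairs_def)
  qed simp
  also have "\<dots> = (\<lambda>m. (p j / ps j - p i / ps i) * gamma j i m)"
    using ji by (simp add: finite_pairs)
  finally show ?thesis .
qed


lemma transport:
  fixes x v :: "nat \<Rightarrow> real"
  assumes "\<forall>m. n \<le> m \<longrightarrow> v m = 0" "(\<Sum>k<n. v k) = 0"
    "\<forall>U s. U \<subseteq> {..<n} \<and> {k. k<n \<and> s < x k} \<subseteq> U \<and> U \<subseteq> {k. s \<le> x k} \<longrightarrow> sum v U \<le> 0"
  shows "v \<in> cone_of (pairs n) (\<lambda>(j,i) m. (x j - x i) * gamma j i m)"
  using assms
proof (induction "card {k. k<n \<and> v k \<noteq> 0}" arbitrary: v rule: less_induct)
  case less
  note out = less.prems(1) and sum0 = less.prems(2) and cut = less.prems(3)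
  show ?case
  proof (cases "\<forall>k<n. v k = 0")
    case True
    then have "v = (\<lambda>m. 0)" using out by (metis not_less)
    then show ?thesis using cone_zero by simp
  next
    case False
    then obtain k0 where k0: "k0 < n" "v k0 \<noteq> 0" by auto
    have "\<exists>k<n. v k > 0"
    proof (rule ccontr)
      assume "\<not> (\<exists>k<n. v k > 0)"
      then have h: "\<And>k. k\<in>{..<n} \<Longrightarrow> 0 \<le> - v k" by auto
      have "(\<Sum>k<n. - v k) = 0" using sum0 by (simp add: sum_negf)
      then have "\<forall>k\<in>{..<n}. - v k = 0" using sum_nonneg_eq_0_iff[of "{..<n}" "\<lambda>k. - v k"] h by simp
      then show False using k0 by auto
    qed
    define S where "S = {k. k<n \<and> v k > 0}"
    have finS: "finite S" "S \<noteq> {}" using \<open>\<exists>k<n. v k > 0\<close> by (auto simp: S_def)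
    have "Max (x ` S) \<in> x ` S" using finS by simp
    then obtain b where b: "b \<in> S" "x b = Max (x ` S)" by auto
    have bmax: "\<And>k. k \<in> S \<Longrightarrow> x k \<le> x b" using finS b(2) by simp
    have bn: "b < n" "v b > 0" using b(1) by (auto simp: S_def)
    define A where "A = {k. k<n \<and> x b < x k}"
    have finA: "finite A" by (auto simp: A_def)
    have bA: "b \<notin> A" by (auto simp: A_def)
    have "sum v (insert b A) \<le> 0"
      using cut[rule_format, of "insert b A" "x b"] bn by (auto simp: A_def subset_iff)
    then have "sum v A < 0" using finA bA bn by simp
    then obtain a where a: "a \<in> A" "v a < 0"
      by (metis not_less sum_nonneg)
    have an: "a < n" "x b < x a" using a(1) by (auto simp: A_def)
    have ab: "a \<noteq> b" using an by auto
    define c where "c = min (- v a) (v b)"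
    have cpos: "c > 0" using a(2) bn by (auto simp: c_def)
    define v' where "v' = (\<lambda>m. v m - c * ((if m = b then 1 else 0) - (if m = a then 1 else 0)))"
    have sumU: "sum v' U = sum v U - (if b \<in> U then c else 0) + (if a \<in> U then c else 0)"
      if "finite U" for U
    proof -
      have "sum v' U = (\<Sum>m\<in>U. v m - (if m = b then c else 0) + (if m = a then c else 0))"
        by (rule sum.cong) (auto simp: v'_def)
      also have "\<dots> = sum v U - (\<Sum>m\<in>U. if m = b then c else 0) + (\<Sum>m\<in>U. if m = a then c else 0)"
        by (simp add: sum.distrib sum_subtractf)
      also have "\<dots> = sum v U - (if b \<in> U then c else 0) + (if a \<in> U then c else 0)"
        using that by simp
      finally show ?thesis .
    qed
    have v'a: "v' a = v a + c" and v'b: "v' b = v b - c" and v'o: "\<And>k. k \<noteq> a \<Longrightarrow> k \<noteq> b \<Longrightarrow> v' k = v k"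
      using ab by (auto simp: v'_def)
    have sub: "{k. k<n \<and> v' k \<noteq> 0} \<subset> {k. k<n \<and> v k \<noteq> 0}"
    proof
      show "{k. k<n \<and> v' k \<noteq> 0} \<subseteq> {k. k<n \<and> v k \<noteq> 0}"
      proof
        fix k assume "k \<in> {k. k<n \<and> v' k \<noteq> 0}"
        then show "k \<in> {k. k<n \<and> v k \<noteq> 0}"
          using v'o[of k] a(2) bn by (cases "k = a \<or> k = b") auto
      qed
      have "v' a = 0 \<or> v' b = 0" using v'a v'b by (auto simp: c_def min_def)
      then show "{k. k<n \<and> v' k \<noteq> 0} \<noteq> {k. k<n \<and> v k \<noteq> 0}"
      proof
        assume "v' a = 0"
        then have "a \<notin> {k. k<n \<and> v' k \<noteq> 0}" by simp
        moreover have "a \<in> {k. k<n \<and> v k \<noteq> 0}" using a(2) an by simp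
        ultimately show ?thesis by blast
      next
        assume "v' b = 0"
        then have "b \<notin> {k. k<n \<and> v' k \<noteq> 0}" by simp
        moreover have "b \<in> {k. k<n \<and> v k \<noteq> 0}" using bn by simp
        ultimately show ?thesis by blast
      qed
    qed
    have v'cone: "v' \<in> cone_of (pairs n) (\<lambda>(j,i) m. (x j - x i) * gamma j i m)"
    proof (rule less.hyps)
      show "card {k. k<n \<and> v' k \<noteq> 0} < card {k. k<n \<and> v k \<noteq> 0}"
        by (rule psubset_card_mono) (use sub in auto)
      show "\<forall>m. n \<le> m \<longrightarrow> v' m = 0" using out an bn by (auto simp: v'_def)
      show "(\<Sum>k<n. v' k) = 0" using sumU[of "{..<n}"] sum0 an bn by simp
      show "\<forall>U s. U \<subseteq> {..<n} \<and> {k. k<n \<and> s < x k} \<subseteq> U \<and> U \<subseteq> {k. s \<le> x k} \<longrightarrow> sum v' U \<le> 0"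
      proof (intro allI impI)
        fix U s assume U: "U \<subseteq> {..<n} \<and> {k. k<n \<and> s < x k} \<subseteq> U \<and> U \<subseteq> {k. s \<le> x k}"
        have finU: "finite U" using U finite_subset by blast
        have cU: "sum v U \<le> 0" using cut U by blast
        show "sum v' U \<le> 0"
        proof (cases "a \<in> U \<and> b \<notin> U")
          case False
          then show ?thesis using sumU[OF finU] cU cpos by auto
        next
          case True
          have xa: "s \<le> x a" using True U by auto
          have xb: "x b \<le> s" using True U bn by (auto simp: not_less[symmetric])
          show ?thesis
          proof (cases "x b = s")
            case True
            have "sum v (insert b U) \<le> 0"
              using cut[rule_format, of "insert b U" s] U bn True by auto
            then have "sum v U + v b \<le> 0" using \<open>a \<in> U \<and> b \<notin> U\<close> finU by simp
            moreover have "c \<le> v b" by (simp add: c_def)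
            ultimately show ?thesis using sumU[OF finU] \<open>a \<in> U \<and> b \<notin> U\<close> by auto
          next
            case False
            then have xb': "x b < s" using xb by auto
            have "\<forall>k\<in>U. v' k \<le> 0"
            proof
              fix k assume k: "k \<in> U"
              show "v' k \<le> 0"
              proof (cases "k = a")
                case True then show ?thesis using v'a by (simp add: c_def)
              next
                case False
                have "k \<noteq> b" using k \<open>a \<in> U \<and> b \<notin> U\<close> by auto
                have "k < n" "s \<le> x k" using k U by auto
                then have "\<not> v k > 0" using bmax[of k] xb' by (auto simp: S_def)
                then show ?thesis using v'o[OF False \<open>k \<noteq> b\<close>] by simp
              qed
            qed
            then show ?thesis by (simp add: sum_nonpos)
          qed
        qed
      qed
    qed
    define p where "p = (min a b, max a b)"
    have pP: "p \<in> pairs n" using ab an bn by (auto simp: p_def pairs_def min_def max_def)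
    have gen: "(\<lambda>(j,i) m. (x j - x i) * gamma j i m) p m
        = (x a - x b) * ((if m = b then 1 else 0) - (if m = a then 1 else 0))" for m
      using ab by (cases "a < b") (auto simp: p_def gamma_def min_def max_def)
    have veq: "v = (\<lambda>m. v' m + (c / (x a - x b)) * (\<lambda>(j,i) m. (x j - x i) * gamma j i m) p m)"
      using an by (auto simp: gen v'_def)
    have "c / (x a - x b) \<ge> 0" using cpos an by simp
    then show ?thesis
      by (subst veq, intro cone_add_gen[OF v'cone finite_pairs pP])
  qed
qed


lemma sum_drop_diag:
  fixes n :: nat
  assumes "i < n" "g i = (0::real)"
  shows "(\<Sum>j\<in>{..<n} - {i}. g j) = (\<Sum>j<n. g j)"
proof -
  have "sum g {..<n} = g i + sum g ({..<n} - {i})" by (rule sum.remove) (use assms in auto)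
  then show ?thesis using assms(2) by simp
qed

lemma cut_general:
  fixes f :: "nat \<Rightarrow> nat \<Rightarrow> real"
  assumes "finite N" "U \<subseteq> N" "\<And>i j. i \<in> U \<Longrightarrow> j \<in> N - U \<Longrightarrow> f i j \<le> 0 \<and> f j i \<ge> 0"
  shows "(\<Sum>i\<in>U. \<Sum>j\<in>N. f i j - f j i) \<le> 0"
proof -
  have finU: "finite U" using assms finite_subset by blast
  have "(\<Sum>i\<in>U. \<Sum>j\<in>N. f i j - f j i) = (\<Sum>i\<in>U. (\<Sum>j\<in>N - U. f i j - f j i) + (\<Sum>j\<in>U. f i j - f j i))"
    by (rule sum.cong) (auto intro: sum.subset_diff[OF assms(2,1)])
  also have "\<dots> = (\<Sum>i\<in>U. \<Sum>j\<in>N - U. f i j - f j i) + (\<Sum>i\<in>U. \<Sum>j\<in>U. f i j - f j i)"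
    by (simp add: sum.distrib)
  also have "(\<Sum>i\<in>U. \<Sum>j\<in>U. f i j - f j i) = 0"
  proof -
    have "(\<Sum>i\<in>U. \<Sum>j\<in>U. f j i) = (\<Sum>i\<in>U. \<Sum>j\<in>U. f i j)" by (rule sum.swap)
    then show ?thesis by (simp add: sum_subtractf)
  qed
  also have "(\<Sum>i\<in>U. \<Sum>j\<in>N - U. f i j - f j i) \<le> 0"
    by (intro sum_nonpos) (use assms(3) in force)
  finally show ?thesis by simp
qed

lemma markov_props:
  assumes ps: "\<forall>i<n. ps i > 0" and mr: "markov_rates n q" and eq: "has_equilibrium n q ps"
  shows "\<forall>m. n \<le> m \<longrightarrow> kolm_rhs n q p m = 0"
    and "(\<Sum>k<n. kolm_rhs n q p k) = 0"
    and "\<forall>U s. U \<subseteq> {..<n} \<and> {k. k<n \<and> s < p k / ps k} \<subseteq> U \<and> U \<subseteq> {k. s \<le> p k / ps k}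
            \<longrightarrow> sum (kolm_rhs n q p) U \<le> 0"
proof -
  show "\<forall>m. n \<le> m \<longrightarrow> kolm_rhs n q p m = 0" by (simp add: kolm_rhs_def)
  define f where "f = (\<lambda>i j. if i = j then 0 else q i j * p j)"
  have vi: "kolm_rhs n q p i = (\<Sum>j<n. f i j - f j i)" if "i < n" for i
  proof -
    have "kolm_rhs n q p i = (\<Sum>j\<in>{..<n} - {i}. f i j - f j i)"
      using that by (simp add: kolm_rhs_def f_def)
    also have "\<dots> = (\<Sum>j<n. f i j - f j i)" by (rule sum_drop_diag[OF that]) simp
    finally show ?thesis .
  qed
  have "(\<Sum>k<n. kolm_rhs n q p k) = (\<Sum>i<n. \<Sum>j<n. f i j - f j i)"
    by (rule sum.cong) (auto simp: vi)
  also have "\<dots> = 0"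
  proof -
    have "(\<Sum>i<n. \<Sum>j<n. f j i) = (\<Sum>i<n. \<Sum>j<n. f i j)" by (rule sum.swap)
    then show ?thesis by (simp add: sum_subtractf)
  qed
  finally show "(\<Sum>k<n. kolm_rhs n q p k) = 0" .
  show "\<forall>U s. U \<subseteq> {..<n} \<and> {k. k<n \<and> s < p k / ps k} \<subseteq> U \<and> U \<subseteq> {k. s \<le> p k / ps k}
            \<longrightarrow> sum (kolm_rhs n q p) U \<le> 0"
  proof (intro allI impI)
    fix U s assume U: "U \<subseteq> {..<n} \<and> {k. k<n \<and> s < p k / ps k} \<subseteq> U \<and> U \<subseteq> {k. s \<le> p k / ps k}"
    define x where "x = (\<lambda>k. p k / ps k)"
    have px: "\<And>k. k < n \<Longrightarrow> p k = ps k * x k" using ps by (auto simp: x_def)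
    define g where "g = (\<lambda>i j. if i = j then 0 else q i j * ps j * (x j - s))"
    have vi: "kolm_rhs n q p i = (\<Sum>j<n. g i j - g j i)" if i: "i < n" for i
    proof -
      have e: "(\<Sum>j\<in>{..<n} - {i}. q i j * ps j) = (\<Sum>j\<in>{..<n} - {i}. q j i) * ps i"
        using eq i by (simp add: has_equilibrium_def)
      have "kolm_rhs n q p i = (\<Sum>j\<in>{..<n} - {i}. (g i j - g j i) + s * (q i j * ps j) - s * (q j i * ps i))"
        using i by (auto simp: kolm_rhs_def g_def px algebra_simps intro!: sum.cong)
      also have "\<dots> = (\<Sum>j\<in>{..<n} - {i}. g i j - g j i) + s * (\<Sum>j\<in>{..<n} - {i}. q i j * ps j)
                     - s * ((\<Sum>j\<in>{..<n} - {i}. q j i) * ps i)"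
        by (simp add: sum.distrib sum_subtractf sum_distrib_left sum_distrib_right)
      also have "\<dots> = (\<Sum>j\<in>{..<n} - {i}. g i j - g j i)" by (simp add: e)
      also have "\<dots> = (\<Sum>j<n. g i j - g j i)" by (rule sum_drop_diag[OF i]) simp
      finally show ?thesis .
    qed
    have "sum (kolm_rhs n q p) U = (\<Sum>i\<in>U. \<Sum>j<n. g i j - g j i)"
      by (rule sum.cong) (use U vi in auto)
    also have "\<dots> \<le> 0"
    proof (rule cut_general)
      show "U \<subseteq> {..<n}" using U by simp
      fix i j assume i: "i \<in> U" and j: "j \<in> {..<n} - U"
      have "i < n" "s \<le> x i" using i U by (auto simp: x_def)
      have "j < n" "\<not> s < x j" using j U by (auto simp: x_def)
      have "i \<noteq> j" using i j by auto
      have "q i j \<ge> 0" "q j i \<ge> 0" using mr \<open>i < n\<close> \<open>j < n\<close> \<open>i \<noteq> j\<close> by (auto simp: markov_rates_def)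
      moreover have "ps i > 0" "ps j > 0" using ps \<open>i < n\<close> \<open>j < n\<close> by auto
      ultimately show "g i j \<le> 0 \<and> g j i \<ge> 0"
        using \<open>s \<le> x i\<close> \<open>\<not> s < x j\<close> \<open>i \<noteq> j\<close>
        by (auto simp: g_def intro!: mult_nonneg_nonpos mult_nonneg_nonneg)
    qed simp
    finally show "sum (kolm_rhs n q p) U \<le> 0" .
  qed
qed


lemma aux1: "(a::real) * (d * g) = (a * \<bar>d\<bar>) * (sgn d * g)"
proof -
  have "(a * \<bar>d\<bar>) * (sgn d * g) = a * (sgn d * \<bar>d\<bar>) * g" by (simp add: mult_ac)
  also have "\<dots> = a * (d * g)" by (simp add: mult_sgn_abs)
  finally show ?thesis by (rule sym)
qed

lemma aux2: "\<bar>D\<bar> \<noteq> 0 \<Longrightarrow> (c / \<bar>D\<bar>) * D = c * sgn (D::real)"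
proof -
  assume h: "\<bar>D\<bar> \<noteq> 0"
  have "(c / \<bar>D\<bar>) * D = (c / \<bar>D\<bar>) * (sgn D * \<bar>D\<bar>)" by (simp add: mult_sgn_abs)
  also have "\<dots> = c * sgn D" using h by (simp add: field_simps)
  finally show ?thesis .
qed

lemma coneG_sub_Q:
  assumes "y \<in> cone_of (pairs n) (\<lambda>(j,i) m. (p j / ps j - p i / ps i) * gamma j i m)"
  shows "y \<in> Qcone n p ps"
proof -
  obtain c where c: "\<forall>k\<in>pairs n. c k \<ge> 0"
    "y = (\<lambda>m. \<Sum>k\<in>pairs n. c k * (\<lambda>(j,i) m. (p j / ps j - p i / ps i) * gamma j i m) k m)"
    using assms unfolding cone_of_def by blast
  define d where "d = (\<lambda>k. c k * (case k of (j,i) \<Rightarrow> \<bar>p j / ps j - p i / ps i\<bar>))"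
  have "y = (\<lambda>m. \<Sum>k\<in>pairs n. d k * (\<lambda>(j,i) m. sgn (p j / ps j - p i / ps i) * gamma j i m) k m)"
    unfolding c(2)
  proof (rule ext, rule sum.cong)
    fix m k assume "k \<in> pairs n"
    obtain j i where k: "k = (j,i)" by (cases k)
    show "c k * (\<lambda>(j,i) m. (p j / ps j - p i / ps i) * gamma j i m) k m
        = d k * (\<lambda>(j,i) m. sgn (p j / ps j - p i / ps i) * gamma j i m) k m"
      unfolding k d_def by (simp only: case_prod_conv) (rule aux1)
  qed simp
  moreover have "\<forall>k\<in>pairs n. d k \<ge> 0" using c(1) by (auto simp: d_def)
  ultimately show ?thesis unfolding Qcone_def cone_of_def by blast
qed

lemma db_equilibrium:
  assumes "detailed_balance n q ps"
  shows "has_equilibrium n q ps"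
  unfolding has_equilibrium_def
proof (intro allI impI)
  fix i assume i: "i < n"
  have "(\<Sum>j\<in>{..<n} - {i}. q i j * ps j) = (\<Sum>j\<in>{..<n} - {i}. q j i * ps i)"
    by (rule sum.cong) (use assms i in \<open>auto simp: detailed_balance_def\<close>)
  then show "(\<Sum>j\<in>{..<n} - {i}. q i j * ps j) = (\<Sum>j\<in>{..<n} - {i}. q j i) * ps i"
    by (simp add: sum_distrib_right)
qed

lemma rev_sub_Q:
  assumes ps: "\<forall>i<n. ps i > 0" and mr: "markov_rates n q" and db: "detailed_balance n q ps"
  shows "kolm_rhs n q p \<in> Qcone n p ps"
proof -
  have "kolm_rhs n q p = (\<lambda>m. \<Sum>(j,i)\<in>pairs n. (q i j * ps j) * ((p j / ps j - p i / ps i) * gamma j i m))"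
    by (rule kolm_db[OF ps db])
  also have "\<dots> \<in> cone_of (pairs n) (\<lambda>(j,i) m. (p j / ps j - p i / ps i) * gamma j i m)"
    unfolding cone_of_def
  proof (rule CollectI, rule exI[of _ "\<lambda>(j,i). q i j * ps j"], intro conjI)
    show "\<forall>k\<in>pairs n. 0 \<le> (case k of (j, i) \<Rightarrow> q i j * ps j)"
    proof
      fix k assume k: "k \<in> pairs n"
      obtain j i where ji: "k = (j,i)" by (cases k)
      have "j < i" "i < n" using k ji by (auto simp: pairs_def)
      then have "q i j \<ge> 0" "ps j > 0" using mr ps by (auto simp: markov_rates_def)
      then show "0 \<le> (case k of (j, i) \<Rightarrow> q i j * ps j)" using ji by simp
    qed
    show "(\<lambda>m. \<Sum>(j,i)\<in>pairs n. (q i j * ps j) * ((p j / ps j - p i / ps i) * gamma j i m))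
        = (\<lambda>m. \<Sum>k\<in>pairs n. (case k of (j, i) \<Rightarrow> q i j * ps j) * (\<lambda>(j,i) m. (p j / ps j - p i / ps i) * gamma j i m) k m)"
      by (rule ext, rule sum.cong) auto
  qed
  finally show ?thesis by (rule coneG_sub_Q)
qed

lemma Q_sub_rev:
  assumes ps: "\<forall>i<n. ps i > 0" and y: "y \<in> Qcone n p ps"
  shows "\<exists>q. y = kolm_rhs n q p \<and> markov_rates n q \<and> detailed_balance n q ps \<and> has_equilibrium n q ps"
proof -
  define x where "x = (\<lambda>k. p k / ps k)"
  obtain c where c: "\<forall>k\<in>pairs n. c k \<ge> 0"
    "y = (\<lambda>m. \<Sum>k\<in>pairs n. c k * (\<lambda>(j,i) m. sgn (p j / ps j - p i / ps i) * gamma j i m) k m)"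
    using y unfolding Qcone_def cone_of_def by blast
  define C where "C = (\<lambda>a b. c (min a b, max a b))"
  define q where "q = (\<lambda>a b. if a \<noteq> b \<and> a < n \<and> b < n \<and> x a \<noteq> x b then C a b / (ps b * \<bar>x a - x b\<bar>) else 0)"
  have Cnn: "C a b \<ge> 0" if "a < n" "b < n" "a \<noteq> b" for a b
    using c(1) that by (auto simp: C_def pairs_def min_def max_def)
  have Csym: "C a b = C b a" for a b by (simp add: C_def min.commute max.commute)
  have mr: "markov_rates n q"
    using Cnn ps by (auto simp: markov_rates_def q_def)
  have db: "detailed_balance n q ps"
    unfolding detailed_balance_def
  proof (intro allI impI)
    fix i j assume h: "i < n" "j < n" "i \<noteq> j"
    have "ps i > 0" "ps j > 0" using ps h by auto
    then show "q i j * ps j = q j i * ps i"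
      using h by (cases "x i = x j") (auto simp: q_def Csym[of i j] abs_minus_commute[of "x i"])
  qed
  have "kolm_rhs n q p = (\<lambda>m. \<Sum>(j,i)\<in>pairs n. (q i j * ps j) * ((p j / ps j - p i / ps i) * gamma j i m))"
    by (rule kolm_db[OF ps db])
  also have "\<dots> = y"
    unfolding c(2)
  proof (rule ext, rule sum.cong)
    fix m k assume k: "k \<in> pairs n"
    obtain j i where ji: "k = (j,i)" by (cases k)
    have h: "j < i" "i < n" using k ji by (auto simp: pairs_def)
    have pj: "ps j > 0" using ps h by auto
    have "q i j * ps j * (x j - x i) = c (j,i) * sgn (x j - x i)"
    proof (cases "x i = x j")
      case True then show ?thesis by (simp add: q_def)
    next
      case False
      then have "q i j * ps j = c (j,i) / \<bar>x i - x j\<bar>"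
        using h pj by (auto simp: q_def C_def min_def max_def)
      moreover have "\<bar>x j - x i\<bar> \<noteq> 0" using False by simp
      ultimately show ?thesis using aux2[of "x j - x i" "c (j,i)"] by (simp add: abs_minus_commute[of "x i"])
    qed
    then show "(case k of (j, i) \<Rightarrow> q i j * ps j * ((p j / ps j - p i / ps i) * gamma j i m))
        = c k * (\<lambda>(j,i) m. sgn (p j / ps j - p i / ps i) * gamma j i m) k m"
      unfolding ji x_def by (simp add: mult.assoc[symmetric])
  qed simp
  finally have "kolm_rhs n q p = y" .
  then show ?thesis using mr db db_equilibrium[OF db] by blast
qed


theorem mainTheorem9:
  fixes n :: nat and ps p0 :: "nat \<Rightarrow> real"
  assumes n2: "n \<ge> 2"
    and ps_pos: "\<forall>i<n. ps i > 0"
    and ps_sum: "(\<Sum>i<n. ps i) = 1"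
    and p0_nonneg: "\<forall>i<n. p0 i \<ge> 0"
    and p0_sum: "(\<Sum>i<n. p0 i) = 1"
  shows "(\<forall>q. markov_rates n q \<and> has_equilibrium n q ps \<longrightarrow>
            kolm_rhs n q p0 \<in> cone_of (pairs n) (\<lambda>(j, i). kolm_rhs n (two_state ps i j) p0))
       \<and> (\<forall>j i. (j, i) \<in> pairs n \<longrightarrow>
            kolm_rhs n (two_state ps i j) p0 = (\<lambda>m. (p0 j / ps j - p0 i / ps i) * gamma j i m))
       \<and> {kolm_rhs n q p0 | q. markov_rates n q \<and> has_equilibrium n q ps}
           = {kolm_rhs n q p0 | q. markov_rates n q \<and> detailed_balance n q ps \<and> has_equilibrium n q ps}
       \<and> {kolm_rhs n q p0 | q. markov_rates n q \<and> detailed_balance n q ps \<and> has_equilibrium n q ps}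
           = Qcone n p0 ps"
proof -
  define G where "G = (\<lambda>(j,i) m. (p0 j / ps j - p0 i / ps i) * gamma j i m)"
  have P2: "\<forall>j i. (j, i) \<in> pairs n \<longrightarrow>
            kolm_rhs n (two_state ps i j) p0 = (\<lambda>m. (p0 j / ps j - p0 i / ps i) * gamma j i m)"
    using part2[OF ps_pos] by blast
  have coneeq: "cone_of (pairs n) (\<lambda>(j, i). kolm_rhs n (two_state ps i j) p0) = cone_of (pairs n) G"
  proof (rule cone_cong)
    fix k assume k: "k \<in> pairs n"
    obtain j i where ji: "k = (j,i)" by (cases k)
    show "(\<lambda>(j, i). kolm_rhs n (two_state ps i j) p0) k = G k"
      using P2 k ji by (simp add: G_def)
  qed
  have gen: "kolm_rhs n q p0 \<in> cone_of (pairs n) G"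
    if mr: "markov_rates n q" and eq: "has_equilibrium n q ps" for q
  proof -
    note mp = markov_props[OF ps_pos mr eq, of p0]
    have "kolm_rhs n q p0 \<in> cone_of (pairs n)
        (\<lambda>(j,i) m. ((\<lambda>k. p0 k / ps k) j - (\<lambda>k. p0 k / ps k) i) * gamma j i m)"
      by (rule transport) (use mp in simp_all)
    then show ?thesis by (simp add: G_def)
  qed
  have P1: "\<forall>q. markov_rates n q \<and> has_equilibrium n q ps \<longrightarrow>
            kolm_rhs n q p0 \<in> cone_of (pairs n) (\<lambda>(j, i). kolm_rhs n (two_state ps i j) p0)"
    using gen coneeq by simp
  have P3: "{kolm_rhs n q p0 | q. markov_rates n q \<and> has_equilibrium n q ps}
           = {kolm_rhs n q p0 | q. markov_rates n q \<and> detailed_balance n q ps \<and> has_equilibrium n q ps}"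
  proof
    show "{kolm_rhs n q p0 | q. markov_rates n q \<and> has_equilibrium n q ps}
        \<subseteq> {kolm_rhs n q p0 | q. markov_rates n q \<and> detailed_balance n q ps \<and> has_equilibrium n q ps}"
    proof
      fix y assume "y \<in> {kolm_rhs n q p0 | q. markov_rates n q \<and> has_equilibrium n q ps}"
      then obtain q where q: "y = kolm_rhs n q p0" "markov_rates n q" "has_equilibrium n q ps" by blast
      have "y \<in> Qcone n p0 ps" using gen[OF q(2,3)] q(1) coneG_sub_Q unfolding G_def by blast
      then show "y \<in> {kolm_rhs n q p0 | q. markov_rates n q \<and> detailed_balance n q ps \<and> has_equilibrium n q ps}"
        using Q_sub_rev[OF ps_pos] by blast
    qed
  qed blast
  have P4: "{kolm_rhs n q p0 | q. markov_rates n q \<and> detailed_balance n q ps \<and> has_equilibrium n q ps}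
           = Qcone n p0 ps"
  proof
    show "{kolm_rhs n q p0 | q. markov_rates n q \<and> detailed_balance n q ps \<and> has_equilibrium n q ps}
        \<subseteq> Qcone n p0 ps"
      using rev_sub_Q[OF ps_pos] by blast
    show "Qcone n p0 ps \<subseteq> {kolm_rhs n q p0 | q. markov_rates n q \<and> detailed_balance n q ps \<and> has_equilibrium n q ps}"
      using Q_sub_rev[OF ps_pos] by blast
  qed
  show ?thesis using P1 P2 P3 P4 by blast
qed

end
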